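(* Consider the parametric weighted random graph mixture model with $Q\ge 2$ groups, and assume: (A1) the $Q(Q+1)/2$ values $\theta_{ql}$, $1\le q\le l\le Q$, are pairwise distinct; (A2) the family $\mathcal M=\{F(\cdot,\theta):\theta\in\Theta\}$ satisfies: (i) no $F(\cdot,\theta)$ has a point mass at $0$; (ii) finite mixtures from $\mathcal M$ are identifiable up to label swapping, i.e. for every integer $r\ge1$, if $\sum_{i=1}^r a_iF(\cdot,\theta_i)=\sum_{i=1}^r a_i'F(\cdot,\theta_i')$ (with nonnegative weights summing to 1) then $\sum_{i=1}^r a_i\delta_{\theta_i}=\sum_{i=1}^r a_i'\delta_{\theta_i'}$. Then the parameters $\boldsymbol\pi$, $\theta_{ql}$, $p_{ql}$, $1\le q\le l\le Q$, are identifiable, up to label swapping, from the joint distribution of $K_3$.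
   Context: Random graph mixture model: nodes have i.i.d. latent groups $Z_i\in\{1,\dots,Q\}$ with $\pi_q=\mathbb P(Z_i=q)\in(0,1)$, $\sum_q\pi_q=1$; edge variables $X_{ij}$ ($i<j$) are conditionally independent given all $Z$'s, with law of $X_{ij}$ depending only on $(Z_i,Z_j)$. Parametric weighted model: $X_{ij}$ takes values in $\mathcal X=\mathbb N$, $\mathbb R$ or $\mathbb R^s$, and given $Z_i=q,Z_j=l$ has law $\mu_{ql}=(1-p_{ql})\delta_0+p_{ql}F(\cdot,\theta_{ql})$, where $p_{ql}=p_{lq}\in(0,1]$, $\theta_{ql}=\theta_{lq}\in\Theta\subset\mathbb R^p$, $\delta_0$ is the Dirac mass at $0$, and $F(\cdot,\theta)$ is a probability measure with a density w.r.t. counting or Lebesgue measure. $K_n$ denotes the collection of the $\binom n2$ edge variables among $n$ nodes. "Up to label swapping" means up to a permutation $\sigma$ of $\{1,\dots,Q\}$ applied simultaneously to all group-indexed parameters. *)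

theory Defs
  imports "HOL-Probability.Probability" "HOL-Combinatorics.Permutations"
begin

text \<open>Groups are indexed by 0..Q-1. Edge values live in a Euclidean space 'x
  (covers N (as a subset of R), R and R^s), equipped with its Borel sigma-algebra.\<close>

definition edge_law :: "('t \<Rightarrow> 'x::euclidean_space measure) \<Rightarrow> real \<Rightarrow> 't \<Rightarrow> 'x measure" where
  "edge_law F p t = measure_of UNIV (sets borel)
     (\<lambda>A. ennreal (1 - p) * indicator A 0 + ennreal p * emeasure (F t) A)"

text \<open>Joint law of K_3 = (X_12, X_13, X_23) in the mixture model.\<close>
definition K3_law :: "nat \<Rightarrow> (nat \<Rightarrow> real) \<Rightarrow> (nat \<Rightarrow> nat \<Rightarrow> real) \<Rightarrow> (nat \<Rightarrow> nat \<Rightarrow> 't)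
     \<Rightarrow> ('t \<Rightarrow> 'x::euclidean_space measure) \<Rightarrow> ('x \<times> 'x \<times> 'x) measure" where
  "K3_law Q \<pi> p \<theta> F = measure_of UNIV (sets (borel \<Otimes>\<^sub>M (borel \<Otimes>\<^sub>M borel)))
     (\<lambda>S. \<Sum>q<Q. \<Sum>l<Q. \<Sum>m<Q. ennreal (\<pi> q * \<pi> l * \<pi> m) *
        emeasure (edge_law F (p q l) (\<theta> q l) \<Otimes>\<^sub>M
                  (edge_law F (p q m) (\<theta> q m) \<Otimes>\<^sub>M edge_law F (p l m) (\<theta> l m))) S)"

definition valid_params :: "nat \<Rightarrow> 't set \<Rightarrow> (nat \<Rightarrow> real) \<Rightarrow> (nat \<Rightarrow> nat \<Rightarrow> real)
     \<Rightarrow> (nat \<Rightarrow> nat \<Rightarrow> 't) \<Rightarrow> bool" where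
  "valid_params Q \<Theta> \<pi> p \<theta> \<longleftrightarrow>
     (\<forall>q<Q. 0 < \<pi> q \<and> \<pi> q < 1) \<and> (\<Sum>q<Q. \<pi> q) = 1 \<and>
     (\<forall>q<Q. \<forall>l<Q. 0 < p q l \<and> p q l \<le> 1 \<and> p q l = p l q \<and>
                  \<theta> q l \<in> \<Theta> \<and> \<theta> q l = \<theta> l q) \<and>
     (\<forall>q l q' l'. q \<le> l \<and> l < Q \<and> q' \<le> l' \<and> l' < Q \<and> \<theta> q l = \<theta> q' l'
        \<longrightarrow> q = q' \<and> l = l')"

text \<open>(A2)(ii): finite mixtures from the family are identifiable up to label swapping;
  the equality of discrete measures sum a_i delta_{theta_i} is written pointwise.\<close>
definition finite_mixture_identifiable :: "'t set \<Rightarrow> ('t \<Rightarrow> 'x::topological_space measure) \<Rightarrow> bool" where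
  "finite_mixture_identifiable \<Theta> F \<longleftrightarrow>
     (\<forall>(r::nat) (a::nat \<Rightarrow> real) t a' t'. r \<ge> 1 \<longrightarrow>
        (\<forall>i<r. a i \<ge> 0 \<and> a' i \<ge> 0 \<and> t i \<in> \<Theta> \<and> t' i \<in> \<Theta>) \<longrightarrow>
        (\<Sum>i<r. a i) = 1 \<longrightarrow> (\<Sum>i<r. a' i) = 1 \<longrightarrow>
        (\<forall>A \<in> sets borel. (\<Sum>i<r. a i * measure (F (t i)) A) = (\<Sum>i<r. a' i * measure (F (t' i)) A)) \<longrightarrow>
        (\<forall>s. (\<Sum>i\<in>{i. i < r \<and> t i = s}. a i) = (\<Sum>i\<in>{i. i < r \<and> t' i = s}. a' i)))"

end

theory Submission
  imports Defs
begin


lemma sa_borel: "sigma_algebra UNIV (sets (borel::'a::topological_space measure))"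
  using sets.sigma_algebra_axioms[of borel] by simp

lemma edge_law_emeasure:
  fixes F :: "'t \<Rightarrow> 'x::euclidean_space measure"
  assumes P: "prob_space (F t)" and S: "sets (F t) = sets borel" and "0 \<le> p" "p \<le> 1"
    and A: "A \<in> sets borel"
  shows "emeasure (edge_law F p t) A = ennreal (1-p) * indicator A 0 + ennreal p * emeasure (F t) A"
  unfolding edge_law_def
proof (rule emeasure_measure_of_sigma[OF sa_borel _ _ A])
  show "positive (sets borel) (\<lambda>A. ennreal (1 - p) * indicator A 0 + ennreal p * emeasure (F t) A)"
    by (simp add: positive_def)
  show "countably_additive (sets borel) (\<lambda>A. ennreal (1 - p) * indicator A 0 + ennreal p * emeasure (F t) A)"
    unfolding countably_additive_def
  proof (intro allI impI)
    fix B :: "nat \<Rightarrow> 'x set"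
    assume r: "range B \<subseteq> sets borel" and d: "disjoint_family B" and "\<Union> (range B) \<in> sets borel"
    have "(\<Sum>i. ennreal (1 - p) * indicator (B i) 0 + ennreal p * emeasure (F t) (B i))
        = ennreal (1 - p) * (\<Sum>i. indicator (B i) 0) + ennreal p * (\<Sum>i. emeasure (F t) (B i))"
      by (simp add: suminf_add[symmetric] ennreal_suminf_cmult)
    also have "\<dots> = ennreal (1 - p) * indicator (\<Union> (range B)) 0 + ennreal p * emeasure (F t) (\<Union> (range B))"
      using suminf_indicator[OF d] suminf_emeasure[of B "F t"] r d S by auto
    finally show "(\<Sum>i. ennreal (1 - p) * indicator (B i) 0 + ennreal p * emeasure (F t) (B i)) =
         ennreal (1 - p) * indicator (\<Union> (range B)) 0 + ennreal p * emeasure (F t) (\<Union> (range B))" .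
  qed
qed

lemma edge_law_sets: "sets (edge_law F p t) = sets borel"
  unfolding edge_law_def using sigma_algebra.sigma_sets_eq[OF sa_borel] by (simp add: sets_measure_of_conv)

lemma edge_law_prob:
  fixes F :: "'t \<Rightarrow> 'x::euclidean_space measure"
  assumes P: "prob_space (F t)" and S: "sets (F t) = sets borel" and "0 \<le> p" "p \<le> 1"
  shows "prob_space (edge_law F p t)"
proof
  have sp: "space (edge_law F p t) = UNIV" using edge_law_sets[of F p t]
    by (metis sets_eq_imp_space_eq space_borel)
  have "space (F t) = UNIV" using S by (metis sets_eq_imp_space_eq space_borel)
  then have "emeasure (F t) UNIV = 1" using prob_space.emeasure_space_1[OF P] by simp
  then show "emeasure (edge_law F p t) (space (edge_law F p t)) = 1"
    using edge_law_emeasure[of F t p UNIV, OF P S assms(3,4)] sp assms(3,4)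
    by (simp add: ennreal_plus[symmetric] del: ennreal_plus)
qed

lemma sa_borel3: "sigma_algebra UNIV (sets (borel \<Otimes>\<^sub>M (borel \<Otimes>\<^sub>M (borel::'x::topological_space measure))))"
  using sets.sigma_algebra_axioms[of "borel \<Otimes>\<^sub>M (borel \<Otimes>\<^sub>M (borel::'x measure))"]
  by (simp add: space_pair_measure)

lemma K3_emeasure:
  fixes F :: "'t \<Rightarrow> 'x::euclidean_space measure"
  assumes H: "\<forall>q<Q. \<forall>l<Q. prob_space (F (\<theta> q l)) \<and> sets (F (\<theta> q l)) = sets borel \<and> 0 \<le> p q l \<and> p q l \<le> 1"
    and X: "X \<in> sets (borel \<Otimes>\<^sub>M (borel \<Otimes>\<^sub>M borel))"
  shows "emeasure (K3_law Q \<pi> p \<theta> F) X = (\<Sum>q<Q. \<Sum>l<Q. \<Sum>m<Q. ennreal (\<pi> q * \<pi> l * \<pi> m) *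
        emeasure (edge_law F (p q l) (\<theta> q l) \<Otimes>\<^sub>M
                  (edge_law F (p q m) (\<theta> q m) \<Otimes>\<^sub>M edge_law F (p l m) (\<theta> l m))) X)"
  unfolding K3_law_def
proof (rule emeasure_measure_of_sigma[OF sa_borel3 _ _ X])
  define N where "N q l m = (edge_law F (p q l) (\<theta> q l) \<Otimes>\<^sub>M
                  (edge_law F (p q m) (\<theta> q m) \<Otimes>\<^sub>M edge_law F (p l m) (\<theta> l m)))" for q l m
  have sN: "sets (N q l m) = sets (borel \<Otimes>\<^sub>M (borel \<Otimes>\<^sub>M (borel::'x measure)))" for q l m
    unfolding N_def by (intro sets_pair_measure_cong edge_law_sets)
  show "positive (sets (borel \<Otimes>\<^sub>M (borel \<Otimes>\<^sub>M borel)))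
     (\<lambda>S. \<Sum>q<Q. \<Sum>l<Q. \<Sum>m<Q. ennreal (\<pi> q * \<pi> l * \<pi> m) *
        emeasure (edge_law F (p q l) (\<theta> q l) \<Otimes>\<^sub>M
                  (edge_law F (p q m) (\<theta> q m) \<Otimes>\<^sub>M edge_law F (p l m) (\<theta> l m))) S)"
    by (simp add: positive_def)
  show "countably_additive (sets (borel \<Otimes>\<^sub>M (borel \<Otimes>\<^sub>M borel)))
     (\<lambda>S. \<Sum>q<Q. \<Sum>l<Q. \<Sum>m<Q. ennreal (\<pi> q * \<pi> l * \<pi> m) *
        emeasure (edge_law F (p q l) (\<theta> q l) \<Otimes>\<^sub>M
                  (edge_law F (p q m) (\<theta> q m) \<Otimes>\<^sub>M edge_law F (p l m) (\<theta> l m))) S)"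
    unfolding countably_additive_def N_def[symmetric]
  proof (intro allI impI)
    fix B :: "nat \<Rightarrow> ('x \<times> 'x \<times> 'x) set"
    assume r: "range B \<subseteq> sets (borel \<Otimes>\<^sub>M (borel \<Otimes>\<^sub>M borel))" and d: "disjoint_family B"
    have e: "(\<Sum>i. emeasure (N q l m) (B i)) = emeasure (N q l m) (\<Union> (range B))" for q l m
      using suminf_emeasure[of B "N q l m"] r d sN by auto
    show "(\<Sum>i. \<Sum>q<Q. \<Sum>l<Q. \<Sum>m<Q. ennreal (\<pi> q * \<pi> l * \<pi> m) * emeasure (N q l m) (B i)) =
       (\<Sum>q<Q. \<Sum>l<Q. \<Sum>m<Q. ennreal (\<pi> q * \<pi> l * \<pi> m) * emeasure (N q l m) (\<Union> (range B)))"
      by (simp add: suminf_sum[OF summableI] ennreal_suminf_cmult e)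
  qed
qed

lemma prod3:
  assumes "prob_space M1" "prob_space M2" "prob_space M3" "A \<in> sets M1" "B \<in> sets M2" "C \<in> sets M3"
  shows "emeasure (M1 \<Otimes>\<^sub>M (M2 \<Otimes>\<^sub>M M3)) (A \<times> (B \<times> C)) = emeasure M1 A * (emeasure M2 B * emeasure M3 C)"
proof -
  have p23: "prob_space (M2 \<Otimes>\<^sub>M M3)" using assms by (simp add: prob_space_pair)
  interpret s23: sigma_finite_measure "M2 \<Otimes>\<^sub>M M3" using p23 by (rule prob_space_imp_sigma_finite)
  interpret s3: sigma_finite_measure M3 using assms(3) by (rule prob_space_imp_sigma_finite)
  show ?thesis using assms
    by (simp add: s23.emeasure_pair_measure_Times s3.emeasure_pair_measure_Times)
qed

lemma edge_nz:
  fixes F :: "'t \<Rightarrow> 'x::euclidean_space measure"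
  assumes P: "prob_space (F t)" and S: "sets (F t) = sets borel" and "0 \<le> p" "p \<le> 1"
    and Z: "emeasure (F t) {0} = 0" and A: "A \<in> sets borel"
  shows "emeasure (edge_law F p t) (A - {0}) = ennreal (p * measure (F t) A)"
proof -
  have "{0} \<in> null_sets (F t)" using Z S by (simp add: null_sets_def)
  then have "emeasure (F t) (A - {0}) = emeasure (F t) A" using A S by (simp add: emeasure_Diff_null_set)
  also have "\<dots> = ennreal (measure (F t) A)"
  proof -
    interpret prob_space "F t" using P .
    show ?thesis by (rule emeasure_eq_measure)
  qed
  finally show ?thesis using edge_law_emeasure[of F t p "A - {0}", OF P S assms(3,4)] A assms(3)
    by (simp add: ennreal_mult)
qed

lemma edge_univ:
  fixes F :: "'t \<Rightarrow> 'x::euclidean_space measure"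
  assumes P: "prob_space (F t)" and S: "sets (F t) = sets borel" and "0 \<le> p" "p \<le> 1"
  shows "emeasure (edge_law F p t) UNIV = 1"
proof -
  interpret prob_space "edge_law F p t" using edge_law_prob[of F t p, OF assms] .
  have "space (edge_law F p t) = UNIV" using edge_law_sets[of F p t]
    by (metis sets_eq_imp_space_eq space_borel)
  then show ?thesis using emeasure_space_1 by simp
qed

lemma sum3_ennreal:
  assumes "\<And>q l m. q < Q \<Longrightarrow> l < Q \<Longrightarrow> m < Q \<Longrightarrow> f q l m = ennreal (g q l m)"
    and "\<And>q l m. q < Q \<Longrightarrow> l < Q \<Longrightarrow> m < Q \<Longrightarrow> 0 \<le> g q l m"
  shows "(\<Sum>q<Q. \<Sum>l<Q. \<Sum>m<Q. f q l m) = ennreal (\<Sum>q<Q. \<Sum>l<Q. \<Sum>m<Q. g q l m)"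
proof -
  have "(\<Sum>q<Q. \<Sum>l<Q. \<Sum>m<Q. f q l m) = (\<Sum>q<Q. \<Sum>l<Q. \<Sum>m<Q. ennreal (g q l m))"
    by (intro sum.cong refl) (simp add: assms)
  also have "\<dots> = (\<Sum>q<Q. \<Sum>l<Q. ennreal (\<Sum>m<Q. g q l m))"
    by (intro sum.cong refl sum_ennreal) (simp add: assms)
  also have "\<dots> = (\<Sum>q<Q. ennreal (\<Sum>l<Q. \<Sum>m<Q. g q l m))"
    by (intro sum.cong refl sum_ennreal sum_nonneg) (simp add: assms)
  also have "\<dots> = ennreal (\<Sum>q<Q. \<Sum>l<Q. \<Sum>m<Q. g q l m)"
    by (intro sum.cong refl sum_ennreal sum_nonneg) (simp add: assms)
  finally show ?thesis .
qed

lemma K3_R: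
  fixes F :: "'t \<Rightarrow> 'x::euclidean_space measure"
  assumes H: "\<forall>q<Q. \<forall>l<Q. prob_space (F (\<theta> q l)) \<and> sets (F (\<theta> q l)) = sets borel \<and> 0 \<le> p q l \<and> p q l \<le> 1
       \<and> emeasure (F (\<theta> q l)) {0} = 0"
    and pi: "\<forall>q<Q. 0 \<le> \<pi> q"
    and A: "A \<in> sets borel" and B: "B \<in> sets borel"
  shows "emeasure (K3_law Q \<pi> p \<theta> F) ((A - {0}) \<times> ((B - {0}) \<times> UNIV)) =
     ennreal (\<Sum>q<Q. \<Sum>l<Q. \<Sum>m<Q. \<pi> q * \<pi> l * \<pi> m * p q l * p q m * measure (F (\<theta> q l)) A * measure (F (\<theta> q m)) B)"
    and "emeasure (K3_law Q \<pi> p \<theta> F) ((A - {0}) \<times> (UNIV \<times> UNIV)) =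
     ennreal (\<Sum>q<Q. \<Sum>l<Q. \<Sum>m<Q. \<pi> q * \<pi> l * \<pi> m * p q l * measure (F (\<theta> q l)) A)"
proof -
  have H': "\<forall>q<Q. \<forall>l<Q. prob_space (F (\<theta> q l)) \<and> sets (F (\<theta> q l)) = sets borel \<and> 0 \<le> p q l \<and> p q l \<le> 1"
    using H by blast
  have X1: "(A - {0}) \<times> ((B - {0}) \<times> UNIV) \<in> sets (borel \<Otimes>\<^sub>M (borel \<Otimes>\<^sub>M (borel::'x measure)))"
    using A B by auto
  have X2: "(A - {0}) \<times> (UNIV \<times> UNIV) \<in> sets (borel \<Otimes>\<^sub>M (borel \<Otimes>\<^sub>M (borel::'x measure)))"
    using A B by (intro pair_measureI) auto
  have mnn: "0 \<le> measure M S" for M :: "'x measure" and S by simp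
  have t1: "ennreal (\<pi> q * \<pi> l * \<pi> m) *
        emeasure (edge_law F (p q l) (\<theta> q l) \<Otimes>\<^sub>M
                  (edge_law F (p q m) (\<theta> q m) \<Otimes>\<^sub>M edge_law F (p l m) (\<theta> l m))) ((A - {0}) \<times> ((B - {0}) \<times> UNIV))
      = ennreal (\<pi> q * \<pi> l * \<pi> m * p q l * p q m * measure (F (\<theta> q l)) A * measure (F (\<theta> q m)) B)"
    if "q < Q" "l < Q" "m < Q" for q l m
  proof -
    have P: "prob_space (edge_law F (p a b) (\<theta> a b))" if "a < Q" "b < Q" for a b
      using H that by (intro edge_law_prob) auto
    have "emeasure (edge_law F (p q l) (\<theta> q l) \<Otimes>\<^sub>M
                  (edge_law F (p q m) (\<theta> q m) \<Otimes>\<^sub>M edge_law F (p l m) (\<theta> l m))) ((A - {0}) \<times> ((B - {0}) \<times> UNIV))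
       = ennreal (p q l * measure (F (\<theta> q l)) A) * (ennreal (p q m * measure (F (\<theta> q m)) B) * 1)"
      using that H A B
      by (subst prod3) (auto intro!: P simp: edge_law_sets edge_nz edge_univ)
    then show ?thesis using that H pi
      by (simp add: ennreal_mult[symmetric] mult_ac)
  qed
  have t2: "ennreal (\<pi> q * \<pi> l * \<pi> m) *
        emeasure (edge_law F (p q l) (\<theta> q l) \<Otimes>\<^sub>M
                  (edge_law F (p q m) (\<theta> q m) \<Otimes>\<^sub>M edge_law F (p l m) (\<theta> l m))) ((A - {0}) \<times> (UNIV \<times> UNIV))
      = ennreal (\<pi> q * \<pi> l * \<pi> m * p q l * measure (F (\<theta> q l)) A)"
    if "q < Q" "l < Q" "m < Q" for q l m
  proof -
    have P: "prob_space (edge_law F (p a b) (\<theta> a b))" if "a < Q" "b < Q" for a b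
      using H that by (intro edge_law_prob) auto
    have "emeasure (edge_law F (p q l) (\<theta> q l) \<Otimes>\<^sub>M
                  (edge_law F (p q m) (\<theta> q m) \<Otimes>\<^sub>M edge_law F (p l m) (\<theta> l m))) ((A - {0}) \<times> (UNIV \<times> UNIV))
       = ennreal (p q l * measure (F (\<theta> q l)) A) * (1 * 1)"
      using that H A B
      by (subst prod3) (auto intro!: P simp: edge_law_sets edge_nz edge_univ)
    then show ?thesis using that H pi
      by (simp add: ennreal_mult[symmetric] mult_ac)
  qed
  have nn1: "0 \<le> \<pi> q * \<pi> l * \<pi> m * p q l * p q m * measure (F (\<theta> q l)) A * measure (F (\<theta> q m)) B"
    if "q < Q" "l < Q" "m < Q" for q l m using that H pi by simp
  have nn2: "0 \<le> \<pi> q * \<pi> l * \<pi> m * p q l * measure (F (\<theta> q l)) A"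
    if "q < Q" "l < Q" "m < Q" for q l m using that H pi by simp
  show "emeasure (K3_law Q \<pi> p \<theta> F) ((A - {0}) \<times> ((B - {0}) \<times> UNIV)) =
     ennreal (\<Sum>q<Q. \<Sum>l<Q. \<Sum>m<Q. \<pi> q * \<pi> l * \<pi> m * p q l * p q m * measure (F (\<theta> q l)) A * measure (F (\<theta> q m)) B)"
    unfolding K3_emeasure[of Q F \<theta> p, OF H' X1]
    by (rule sum3_ennreal[OF t1 nn1])
  show "emeasure (K3_law Q \<pi> p \<theta> F) ((A - {0}) \<times> (UNIV \<times> UNIV)) =
     ennreal (\<Sum>q<Q. \<Sum>l<Q. \<Sum>m<Q. \<pi> q * \<pi> l * \<pi> m * p q l * measure (F (\<theta> q l)) A)"
    unfolding K3_emeasure[of Q F \<theta> p, OF H' X2]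
    by (rule sum3_ennreal[OF t2 nn2])
qed

lemma mix_ident:
  fixes I :: "'i set" and c c' :: "'i \<Rightarrow> real" and u u' :: "'i \<Rightarrow> 't"
    and F :: "'t \<Rightarrow> 'x::euclidean_space measure"
  assumes A2ii: "finite_mixture_identifiable \<Theta> F"
    and Fp: "\<And>t. t \<in> \<Theta> \<Longrightarrow> prob_space (F t) \<and> sets (F t) = sets borel"
    and fin: "finite I"
    and nn: "\<And>i. i \<in> I \<Longrightarrow> 0 \<le> c i \<and> 0 \<le> c' i \<and> u i \<in> \<Theta> \<and> u' i \<in> \<Theta>"
    and eq: "\<forall>A\<in>sets borel. (\<Sum>i\<in>I. c i * measure (F (u i)) A) = (\<Sum>i\<in>I. c' i * measure (F (u' i)) A)"
  shows "(\<Sum>i\<in>{i\<in>I. u i = s}. c i) = (\<Sum>i\<in>{i\<in>I. u' i = s}. c' i)"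
proof -
  have m1: "measure (F t) UNIV = 1" if "t \<in> \<Theta>" for t
  proof -
    interpret prob_space "F t" using Fp[OF that] by blast
    have "space (F t) = UNIV" using Fp[OF that] by (metis sets_eq_imp_space_eq space_borel)
    then show ?thesis using prob_space by simp
  qed
  define T where "T = (\<Sum>i\<in>I. c i)"
  have T': "T = (\<Sum>i\<in>I. c' i)"
    using eq[rule_format, of UNIV] nn m1 unfolding T_def by simp
  have Tnn: "0 \<le> T" unfolding T_def using nn by (simp add: sum_nonneg)
  have f1: "(\<Sum>i\<in>{i\<in>I. u i = s}. c i) = (\<Sum>i\<in>I. if u i = s then c i else 0)"
    using fin by (simp add: sum.inter_filter)
  have f2: "(\<Sum>i\<in>{i\<in>I. u' i = s}. c' i) = (\<Sum>i\<in>I. if u' i = s then c' i else 0)"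
    using fin by (simp add: sum.inter_filter)
  show ?thesis
  proof (cases "T = 0")
    case True
    then have "\<forall>i\<in>I. c i = 0" "\<forall>i\<in>I. c' i = 0"
      using sum_nonneg_eq_0_iff[OF fin] nn T' unfolding T_def by metis+
    then show ?thesis unfolding f1 f2 by (auto intro!: trans[OF sum.neutral sum.neutral[symmetric]])
  next
    case False
    then have Tp: "T > 0" using Tnn by simp
    then have "I \<noteq> {}" unfolding T_def by auto
    define r where "r = card I"
    have r1: "r \<ge> 1" using \<open>I \<noteq> {}\<close> fin unfolding r_def by (simp add: Suc_le_eq card_gt_0_iff)
    obtain h where h: "bij_betw h {0..<r} I" using ex_bij_betw_nat_finite[OF fin] unfolding r_def by blast
    have hI: "h i \<in> I" if "i < r" for i using h that by (auto dest: bij_betwE)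
    have ri: "{..<r} = {0..<r}" by auto
    have reidx: "(\<Sum>i<r. g (h i)) = (\<Sum>j\<in>I. g j)" for g :: "'i \<Rightarrow> real"
      unfolding ri using sum.reindex_bij_betw[OF h] .
    have filt: "{i. i < r \<and> P i} = {i\<in>{..<r}. P i}" for P by auto
    have h1: "\<forall>i<r. 0 \<le> c (h i) / T \<and> 0 \<le> c' (h i) / T \<and> u (h i) \<in> \<Theta> \<and> u' (h i) \<in> \<Theta>"
      using nn hI Tnn by auto
    have h2: "(\<Sum>i<r. c (h i) / T) = 1"
      using reidx[of "\<lambda>j. c j / T"] Tp by (simp add: sum_divide_distrib[symmetric] T_def)
    have h3: "(\<Sum>i<r. c' (h i) / T) = 1"
      using reidx[of "\<lambda>j. c' j / T"] Tp by (simp add: sum_divide_distrib[symmetric] T')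
    have h4: "\<forall>A\<in>sets borel. (\<Sum>i<r. c (h i) / T * measure (F (u (h i))) A) =
             (\<Sum>i<r. c' (h i) / T * measure (F (u' (h i))) A)"
    proof
      fix A :: "'x set" assume A: "A \<in> sets borel"
      have "(\<Sum>i<r. c (h i) / T * measure (F (u (h i))) A) = (\<Sum>i<r. c (h i) * measure (F (u (h i))) A) / T"
        by (simp add: sum_divide_distrib)
      also have "\<dots> = (\<Sum>j\<in>I. c j * measure (F (u j)) A) / T"
        using reidx[of "\<lambda>j. c j * measure (F (u j)) A"] by simp
      also have "\<dots> = (\<Sum>j\<in>I. c' j * measure (F (u' j)) A) / T" using eq A by simp
      also have "\<dots> = (\<Sum>i<r. c' (h i) * measure (F (u' (h i))) A) / T"
        using reidx[of "\<lambda>j. c' j * measure (F (u' j)) A"] by simp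
      also have "\<dots> = (\<Sum>i<r. c' (h i) / T * measure (F (u' (h i))) A)"
        by (simp add: sum_divide_distrib)
      finally show "(\<Sum>i<r. c (h i) / T * measure (F (u (h i))) A) =
           (\<Sum>i<r. c' (h i) / T * measure (F (u' (h i))) A)" .
    qed
    have key: "(\<Sum>i\<in>{i. i < r \<and> u (h i) = s}. c (h i) / T) = (\<Sum>i\<in>{i. i < r \<and> u' (h i) = s}. c' (h i) / T)"
      using A2ii[unfolded finite_mixture_identifiable_def, THEN spec[of _ r], THEN spec[of _ "\<lambda>i. c (h i) / T"],
         THEN spec[of _ "\<lambda>i. u (h i)"], THEN spec[of _ "\<lambda>i. c' (h i) / T"], THEN spec[of _ "\<lambda>i. u' (h i)"]]
        r1 h1 h2 h3 h4 by blast
    have k2: "(\<Sum>i\<in>{i. i < r \<and> P (h i)}. g (h i) / T) = (\<Sum>j\<in>I. if P j then g j else 0) / T"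
      for P and g :: "'i \<Rightarrow> real"
    proof -
      have "(\<Sum>i\<in>{i. i < r \<and> P (h i)}. g (h i) / T) = (\<Sum>i<r. if P (h i) then g (h i) / T else 0)"
      proof -
        have "{i. i < r \<and> P (h i)} = {i\<in>{..<r}. P (h i)}" by auto
        then show ?thesis by (simp only:) (rule sum.inter_filter, simp)
      qed
      also have "\<dots> = (\<Sum>j\<in>I. if P j then g j / T else 0)"
        using reidx[of "\<lambda>j. if P j then g j / T else 0"] by simp
      also have "\<dots> = (\<Sum>j\<in>I. (if P j then g j else 0) / T)" by (intro sum.cong) auto
      also have "\<dots> = (\<Sum>j\<in>I. if P j then g j else 0) / T" by (simp add: sum_divide_distrib)
      finally show ?thesis .
    qed
    show ?thesis unfolding f1 f2 using key k2[where P="\<lambda>j. u j = s" and g=c] k2[where P="\<lambda>j. u' j = s" and g=c'] Tp by simp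
  qed
qed



lemma theta_inj:
  assumes v: "valid_params Q \<Theta> \<pi> p \<theta>" and "q < Q" "l < Q" "q' < Q" "l' < Q" "\<theta> q l = \<theta> q' l'"
  shows "(q = q' \<and> l = l') \<or> (q = l' \<and> l = q')"
proof -
  have sym: "\<theta> a b = \<theta> b a" if "a < Q" "b < Q" for a b using v that unfolding valid_params_def by blast
  have d: "\<And>q l q' l'. q \<le> l \<Longrightarrow> l < Q \<Longrightarrow> q' \<le> l' \<Longrightarrow> l' < Q \<Longrightarrow> \<theta> q l = \<theta> q' l' \<Longrightarrow> q = q' \<and> l = l'"
    using v unfolding valid_params_def by blast
  have e1: "\<theta> q l = \<theta> (min q l) (max q l)" using sym assms by (cases "q \<le> l") (auto simp: min_def max_def)
  have e2: "\<theta> q' l' = \<theta> (min q' l') (max q' l')" using sym assms by (cases "q' \<le> l'") (auto simp: min_def max_def)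
  have "min q l = min q' l' \<and> max q l = max q' l'"
    using d[of "min q l" "max q l" "min q' l'" "max q' l'"] e1 e2 assms by (simp add: max_def)
  then show ?thesis by (auto simp: min_def max_def split: if_splits)
qed

definition Adj :: "nat \<Rightarrow> (nat \<Rightarrow> nat \<Rightarrow> 't) \<Rightarrow> 't \<Rightarrow> 't \<Rightarrow> bool" where
  "Adj Q \<theta> s s' \<longleftrightarrow> (\<exists>q<Q. \<exists>l<Q. \<exists>m<Q. \<theta> q l = s \<and> \<theta> q m = s')"

definition Diag :: "nat \<Rightarrow> (nat \<Rightarrow> nat \<Rightarrow> 't) \<Rightarrow> 't \<Rightarrow> bool" where
  "Diag Q \<theta> s \<longleftrightarrow> Adj Q \<theta> s s \<and> (\<forall>x y. Adj Q \<theta> s x \<and> Adj Q \<theta> s y \<longrightarrow> Adj Q \<theta> x y)"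

lemma Adj_intro: "q < Q \<Longrightarrow> l < Q \<Longrightarrow> m < Q \<Longrightarrow> Adj Q \<theta> (\<theta> q l) (\<theta> q m)"
  unfolding Adj_def by blast

lemma diag_iff:
  assumes v: "valid_params Q \<Theta> \<pi> p \<theta>"
  shows "Diag Q \<theta> s \<longleftrightarrow> (\<exists>a<Q. s = \<theta> a a)"
proof
  have sym: "\<theta> a b = \<theta> b a" if "a < Q" "b < Q" for a b using v that unfolding valid_params_def by blast
  assume D: "Diag Q \<theta> s"
  then obtain q l m where ql: "q < Q" "l < Q" "\<theta> q l = s" unfolding Diag_def Adj_def by blast
  show "\<exists>a<Q. s = \<theta> a a"
  proof (cases "q = l")
    case True then show ?thesis using ql by auto
  next
    case False
    have "Adj Q \<theta> s (\<theta> q q)" unfolding Adj_def using ql by blast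
    moreover have "Adj Q \<theta> s (\<theta> l l)" unfolding Adj_def using ql sym[of l q] by (metis)
    ultimately have "Adj Q \<theta> (\<theta> q q) (\<theta> l l)" using D unfolding Diag_def by blast
    then obtain q1 l1 m1 where "q1 < Q" "l1 < Q" "m1 < Q" "\<theta> q1 l1 = \<theta> q q" "\<theta> q1 m1 = \<theta> l l"
      unfolding Adj_def by blast
    then have "q1 = q" "q1 = l" using theta_inj[OF v] ql by blast+
    then show ?thesis using False by simp
  qed
next
  assume "\<exists>a<Q. s = \<theta> a a"
  then obtain a where a: "a < Q" "s = \<theta> a a" by blast
  have nb: "\<exists>m<Q. x = \<theta> a m" if adj: "Adj Q \<theta> s x" for x
  proof -
    obtain q l m where qlm: "q < Q" "l < Q" "m < Q" "\<theta> q l = s" "\<theta> q m = x"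
      using adj unfolding Adj_def by blast
    then have "\<theta> q l = \<theta> a a" using a by simp
    then have "q = a" using theta_inj[OF v, of q l a a] qlm a by auto
    then show ?thesis using qlm by auto
  qed
  show "Diag Q \<theta> s" unfolding Diag_def
  proof (intro conjI allI impI)
    show "Adj Q \<theta> s s" unfolding Adj_def a(2) using a(1) by blast
    fix x y assume "Adj Q \<theta> s x \<and> Adj Q \<theta> s y"
    then obtain m m' where mm: "m < Q" "x = \<theta> a m" "m' < Q" "y = \<theta> a m'" using nb by blast
    show "Adj Q \<theta> x y" unfolding Adj_def mm(2,4) using a mm(1,3) by blast
  qed
qed

lemma perm_exists:
  assumes v: "valid_params Q \<Theta> \<pi> p \<theta>" and v': "valid_params Q \<Theta> \<pi>' p' \<theta>'"
    and adj: "\<And>s s'. Adj Q \<theta> s s' \<longleftrightarrow> Adj Q \<theta>' s s'"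
  shows "\<exists>\<sigma>. \<sigma> permutes {..<Q} \<and> (\<forall>q<Q. \<forall>l<Q. \<theta>' q l = \<theta> (\<sigma> q) (\<sigma> l))"
proof -
  have sym': "\<theta>' a b = \<theta>' b a" if "a < Q" "b < Q" for a b using v' that unfolding valid_params_def by blast
  have DD: "Diag Q \<theta> s \<longleftrightarrow> Diag Q \<theta>' s" for s unfolding Diag_def using adj by simp
  have ex: "\<exists>a<Q. \<theta> a a = \<theta>' q q" if "q < Q" for q
  proof -
    have "\<exists>a<Q. \<theta>' q q = \<theta>' a a" using that by auto
    then have "Diag Q \<theta>' (\<theta>' q q)" by (simp only: diag_iff[OF v'])
    then have "Diag Q \<theta> (\<theta>' q q)" using DD by simp
    then obtain a where "a < Q" "\<theta>' q q = \<theta> a a" by (auto simp only: diag_iff[OF v])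
    then show ?thesis by auto
  qed
  define \<sigma> where "\<sigma> q = (if q < Q then (SOME a. a < Q \<and> \<theta> a a = \<theta>' q q) else q)" for q
  have s1: "\<sigma> q < Q \<and> \<theta> (\<sigma> q) (\<sigma> q) = \<theta>' q q" if "q < Q" for q
    using someI_ex[OF ex[OF that]] that unfolding \<sigma>_def by simp
  have inj: "inj_on \<sigma> {..<Q}"
  proof (rule inj_onI)
    fix x y assume xy: "x \<in> {..<Q}" "y \<in> {..<Q}" "\<sigma> x = \<sigma> y"
    then have "\<theta>' x x = \<theta>' y y" using s1[of x] s1[of y] by simp
    then show "x = y" using theta_inj[OF v', of x x y y] xy by auto
  qed
  have img: "\<sigma> ` {..<Q} = {..<Q}"
    by (rule endo_inj_surj) (use inj s1 in auto)
  have perm: "\<sigma> permutes {..<Q}"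
  proof (rule bij_imp_permutes)
    show "bij_betw \<sigma> {..<Q} {..<Q}" using inj img by (simp add: bij_betw_def)
    show "\<sigma> x = x" if "x \<notin> {..<Q}" for x using that by (simp add: \<sigma>_def)
  qed
  have th: "\<theta>' q l = \<theta> (\<sigma> q) (\<sigma> l)" if ql: "q < Q" "l < Q" for q l
  proof (cases "q = l")
    case True then show ?thesis using s1 ql by simp
  next
    case False
    have ne: "\<sigma> q \<noteq> \<sigma> l" using inj False ql by (auto dest: inj_onD)
    have sq: "\<sigma> q < Q" "\<sigma> l < Q" using s1 ql by auto
    have "Adj Q \<theta>' (\<theta>' q q) (\<theta>' q l)" using ql by (intro Adj_intro)
    then have "Adj Q \<theta> (\<theta> (\<sigma> q) (\<sigma> q)) (\<theta>' q l)" using adj s1 ql by simp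
    then obtain q1 l1 m1 where A1: "q1 < Q" "l1 < Q" "m1 < Q" "\<theta> q1 l1 = \<theta> (\<sigma> q) (\<sigma> q)" "\<theta> q1 m1 = \<theta>' q l"
      unfolding Adj_def by blast
    have q1: "q1 = \<sigma> q" using theta_inj[OF v, of q1 l1 "\<sigma> q" "\<sigma> q"] sq A1 by auto
    have "Adj Q \<theta>' (\<theta>' l l) (\<theta>' l q)" using ql by (intro Adj_intro)
    then have "Adj Q \<theta>' (\<theta>' l l) (\<theta>' q l)" using sym'[OF ql] by simp
    then have "Adj Q \<theta> (\<theta> (\<sigma> l) (\<sigma> l)) (\<theta>' q l)" using adj s1 ql by simp
    then obtain q2 l2 m2 where A2: "q2 < Q" "l2 < Q" "m2 < Q" "\<theta> q2 l2 = \<theta> (\<sigma> l) (\<sigma> l)" "\<theta> q2 m2 = \<theta>' q l"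
      unfolding Adj_def by blast
    have q2: "q2 = \<sigma> l" using theta_inj[OF v, of q2 l2 "\<sigma> l" "\<sigma> l"] sq A2 by auto
    have "\<theta> (\<sigma> q) m1 = \<theta> (\<sigma> l) m2" using A1(5) A2(5) q1 q2 by simp
    then have "m1 = \<sigma> l" using theta_inj[OF v, of "\<sigma> q" m1 "\<sigma> l" m2] ne sq A1(3) A2(3) by auto
    then show ?thesis using A1(5) q1 by simp
  qed
  show ?thesis using perm th by (intro exI[of _ \<sigma>]) auto
qed



definition c1 :: "(nat \<Rightarrow> real) \<Rightarrow> (nat \<Rightarrow> nat \<Rightarrow> real) \<Rightarrow> nat \<times> nat \<times> nat \<Rightarrow> real" where
  "c1 \<pi> p = (\<lambda>(q,l,m). \<pi> q * \<pi> l * \<pi> m * p q l)"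
definition c2 :: "(nat \<Rightarrow> real) \<Rightarrow> (nat \<Rightarrow> nat \<Rightarrow> real) \<Rightarrow> nat \<times> nat \<times> nat \<Rightarrow> real" where
  "c2 \<pi> p = (\<lambda>(q,l,m). \<pi> q * \<pi> l * \<pi> m * p q l * p q m)"
definition u1 :: "(nat \<Rightarrow> nat \<Rightarrow> 't) \<Rightarrow> nat \<times> nat \<times> nat \<Rightarrow> 't" where
  "u1 \<theta> = (\<lambda>(q,l,m). \<theta> q l)"
definition v1 :: "(nat \<Rightarrow> nat \<Rightarrow> 't) \<Rightarrow> nat \<times> nat \<times> nat \<Rightarrow> 't" where
  "v1 \<theta> = (\<lambda>(q,l,m). \<theta> q m)"

definition e1 where "e1 Q \<pi> p \<theta> s = (\<Sum>i\<in>{i\<in>{..<Q}\<times>{..<Q}\<times>{..<Q}. u1 \<theta> i = s}. c1 \<pi> p i)"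
definition e3 where "e3 Q \<pi> p \<theta> s s' = (\<Sum>i\<in>{i\<in>{..<Q}\<times>{..<Q}\<times>{..<Q}. u1 \<theta> i = s \<and> v1 \<theta> i = s'}. c2 \<pi> p i)"

lemma sum3_prod: "(\<Sum>q<Q. \<Sum>l<Q. \<Sum>m<Q. f q l m) = (\<Sum>(q,l,m)\<in>{..<Q}\<times>{..<Q}\<times>{..<Q}. f q l m)"
  by (simp add: sum.cartesian_product)

lemma c_pos:
  assumes v: "valid_params Q \<Theta> \<pi> p \<theta>" and i: "i \<in> {..<Q}\<times>{..<Q}\<times>{..<Q}"
  shows "0 < c1 \<pi> p i" "0 < c2 \<pi> p i" "u1 \<theta> i \<in> \<Theta>" "v1 \<theta> i \<in> \<Theta>"
  using v i unfolding valid_params_def c1_def c2_def u1_def v1_def by auto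

lemma e3_pos:
  assumes v: "valid_params Q \<Theta> \<pi> p \<theta>"
  shows "0 < e3 Q \<pi> p \<theta> s s' \<longleftrightarrow> Adj Q \<theta> s s'"
proof -
  let ?S = "{i\<in>{..<Q}\<times>{..<Q}\<times>{..<Q}. u1 \<theta> i = s \<and> v1 \<theta> i = s'}"
  have fin: "finite ?S" by simp
  have "?S \<noteq> {} \<longleftrightarrow> Adj Q \<theta> s s'" unfolding Adj_def u1_def v1_def by auto
  moreover have "0 < e3 Q \<pi> p \<theta> s s' \<longleftrightarrow> ?S \<noteq> {}"
  proof
    assume h: "0 < e3 Q \<pi> p \<theta> s s'"
    show "?S \<noteq> {}"
    proof
      assume "?S = {}"
      then have "e3 Q \<pi> p \<theta> s s' = 0" unfolding e3_def by (simp only: sum.empty)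
      then show False using h by simp
    qed
  next
    assume "?S \<noteq> {}"
    then obtain i where "i \<in> ?S" by blast
    then show "0 < e3 Q \<pi> p \<theta> s s'" unfolding e3_def
      using c_pos[OF v] by (intro sum_pos2[OF fin, of i]) (auto intro: less_imp_le)
  qed
  ultimately show ?thesis by simp
qed

lemma e1_diag:
  assumes v: "valid_params Q \<Theta> \<pi> p \<theta>" and a: "a < Q"
  shows "e1 Q \<pi> p \<theta> (\<theta> a a) = \<pi> a * \<pi> a * p a a"
proof -
  have S: "{i\<in>{..<Q}\<times>{..<Q}\<times>{..<Q}. u1 \<theta> i = \<theta> a a} = (\<lambda>m. (a,a,m)) ` {..<Q}"
  proof (intro set_eqI iffI)
    fix i assume "i \<in> {i\<in>{..<Q}\<times>{..<Q}\<times>{..<Q}. u1 \<theta> i = \<theta> a a}"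
    then obtain q l m where i: "i = (q,l,m)" "q < Q" "l < Q" "m < Q" "\<theta> q l = \<theta> a a"
      unfolding u1_def by auto
    then have "q = a" "l = a" using theta_inj[OF v, of q l a a] a by auto
    then show "i \<in> (\<lambda>m. (a,a,m)) ` {..<Q}" using i by auto
  qed (use a in \<open>auto simp: u1_def\<close>)
  have "e1 Q \<pi> p \<theta> (\<theta> a a) = (\<Sum>m<Q. \<pi> a * \<pi> a * \<pi> m * p a a)"
    unfolding e1_def S by (subst sum.reindex) (auto simp: inj_on_def c1_def)
  also have "\<dots> = \<pi> a * \<pi> a * p a a * (\<Sum>m<Q. \<pi> m)" by (simp add: sum_distrib_left mult_ac)
  also have "\<dots> = \<pi> a * \<pi> a * p a a" using v unfolding valid_params_def by simp
  finally show ?thesis .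
qed

lemma e3_val:
  assumes v: "valid_params Q \<Theta> \<pi> p \<theta>" and a: "a < Q" and b: "b < Q"
  shows "e3 Q \<pi> p \<theta> (\<theta> a a) (\<theta> a b) = \<pi> a * \<pi> a * \<pi> b * p a a * p a b"
proof -
  have S: "{i\<in>{..<Q}\<times>{..<Q}\<times>{..<Q}. u1 \<theta> i = \<theta> a a \<and> v1 \<theta> i = \<theta> a b} = {(a,a,b)}"
  proof (intro set_eqI iffI)
    fix i assume "i \<in> {i\<in>{..<Q}\<times>{..<Q}\<times>{..<Q}. u1 \<theta> i = \<theta> a a \<and> v1 \<theta> i = \<theta> a b}"
    then obtain q l m where i: "i = (q,l,m)" "q < Q" "l < Q" "m < Q" "\<theta> q l = \<theta> a a" "\<theta> q m = \<theta> a b"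
      unfolding u1_def v1_def by auto
    then have "q = a" "l = a" using theta_inj[OF v, of q l a a] a by auto
    then have "m = b" using theta_inj[OF v, of a m a b] i a b by auto
    then show "i \<in> {(a,a,b)}" using i \<open>q = a\<close> \<open>l = a\<close> by auto
  qed (use a b in \<open>auto simp: u1_def v1_def\<close>)
  show ?thesis unfolding e3_def S by (simp add: c2_def)
qed

lemma alg:
  fixes x y x' y' :: real
  assumes "0 < x" "0 < y" "0 < x'" "0 < y'" "x'^2 * y' = x^2 * y" "x'^3 * y'^2 = x^3 * y^2"
  shows "x' = x \<and> y' = y"
proof -
  have "x' = (x'^2 * y')^2 / (x'^3 * y'^2)" using assms by (simp add: field_simps power2_eq_square power3_eq_cube)
  also have "\<dots> = (x^2 * y)^2 / (x^3 * y^2)" using assms by simp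
  also have "\<dots> = x" using assms by (simp add: field_simps power2_eq_square power3_eq_cube)
  finally have "x' = x" .
  then show ?thesis using assms by simp
qed



lemma N1_eq: "(\<Sum>q<Q. \<Sum>l<Q. \<Sum>m<Q. \<pi> q * \<pi> l * \<pi> m * p q l * measure (G (\<theta> q l)) A)
   = (\<Sum>i\<in>{..<Q}\<times>{..<Q}\<times>{..<Q}. c1 \<pi> p i * measure (G (u1 \<theta> i)) A)"
  unfolding sum3_prod by (intro sum.cong) (auto simp: c1_def u1_def)

lemma N2_eq: "(\<Sum>q<Q. \<Sum>l<Q. \<Sum>m<Q. \<pi> q * \<pi> l * \<pi> m * p q l * p q m * measure (G (\<theta> q l)) A * measure (G (\<theta> q m)) B)
   = (\<Sum>i\<in>{..<Q}\<times>{..<Q}\<times>{..<Q}. c2 \<pi> p i * measure (G (u1 \<theta> i)) A * measure (G (v1 \<theta> i)) B)"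
  unfolding sum3_prod by (intro sum.cong) (auto simp: c2_def u1_def v1_def)

lemma conv3: "finite I \<Longrightarrow> (\<Sum>i\<in>{i\<in>I. v i = s'}. if u i = s then c i else 0) = (\<Sum>i\<in>{i\<in>I. u i = s \<and> v i = s'}. c i)"
proof -
  assume fin: "finite I"
  have "(\<Sum>i\<in>{i\<in>I. v i = s'}. if u i = s then c i else 0) = (\<Sum>i\<in>{i\<in>{i\<in>I. v i = s'}. u i = s}. c i)"
    by (rule sum.inter_filter[symmetric]) (use fin in simp)
  also have "{i\<in>{i\<in>I. v i = s'}. u i = s} = {i\<in>I. u i = s \<and> v i = s'}" by auto
  finally show ?thesis .
qed

theorem theorem5:
  fixes Q :: nat and \<Theta> :: "'t::euclidean_space set"
    and F :: "'t \<Rightarrow> 'x::euclidean_space measure"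
    and \<pi> \<pi>' :: "nat \<Rightarrow> real" and p p' :: "nat \<Rightarrow> nat \<Rightarrow> real"
    and \<theta> \<theta>' :: "nat \<Rightarrow> nat \<Rightarrow> 't"
  assumes Q2: "Q \<ge> 2"
    and F_prob: "\<And>t. t \<in> \<Theta> \<Longrightarrow> prob_space (F t) \<and> sets (F t) = sets borel"
    and A2i: "\<And>t. t \<in> \<Theta> \<Longrightarrow> emeasure (F t) {0} = 0"
    and A2ii: "finite_mixture_identifiable \<Theta> F"
    and valid: "valid_params Q \<Theta> \<pi> p \<theta>"
    and valid': "valid_params Q \<Theta> \<pi>' p' \<theta>'"
    and same_law: "K3_law Q \<pi> p \<theta> F = K3_law Q \<pi>' p' \<theta>' F"
  shows "\<exists>\<sigma>. \<sigma> permutes {..<Q} \<and> (\<forall>q<Q. \<pi>' q = \<pi> (\<sigma> q)) \<and>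
           (\<forall>q<Q. \<forall>l<Q. p' q l = p (\<sigma> q) (\<sigma> l) \<and> \<theta>' q l = \<theta> (\<sigma> q) (\<sigma> l))"
proof -
  let ?I = "{..<Q}\<times>{..<Q}\<times>{..<Q}"
  have finI: "finite ?I" by simp
  have H: "\<forall>q<Q. \<forall>l<Q. prob_space (F (\<theta> q l)) \<and> sets (F (\<theta> q l)) = sets borel \<and> 0 \<le> p q l \<and> p q l \<le> 1
       \<and> emeasure (F (\<theta> q l)) {0} = 0"
    using valid F_prob A2i unfolding valid_params_def by (auto intro: less_imp_le)
  have H': "\<forall>q<Q. \<forall>l<Q. prob_space (F (\<theta>' q l)) \<and> sets (F (\<theta>' q l)) = sets borel \<and> 0 \<le> p' q l \<and> p' q l \<le> 1
       \<and> emeasure (F (\<theta>' q l)) {0} = 0"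
    using valid' F_prob A2i unfolding valid_params_def by (auto intro: less_imp_le)
  have pi: "\<forall>q<Q. 0 \<le> \<pi> q" using valid unfolding valid_params_def by auto
  have pi': "\<forall>q<Q. 0 \<le> \<pi>' q" using valid' unfolding valid_params_def by auto
  have nn1: "\<And>i. i \<in> ?I \<Longrightarrow> 0 \<le> c1 \<pi> p i \<and> 0 \<le> c1 \<pi>' p' i \<and> u1 \<theta> i \<in> \<Theta> \<and> u1 \<theta>' i \<in> \<Theta>"
    using c_pos[OF valid] c_pos[OF valid'] by (auto intro: less_imp_le)
  have mnn: "0 \<le> measure M S" for M :: "'x measure" and S by simp
  have R1: "\<forall>A\<in>sets borel. (\<Sum>i\<in>?I. c1 \<pi> p i * measure (F (u1 \<theta> i)) A) = (\<Sum>i\<in>?I. c1 \<pi>' p' i * measure (F (u1 \<theta>' i)) A)"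
  proof
    fix A :: "'x set" assume A: "A \<in> sets borel"
    have "ennreal (\<Sum>i\<in>?I. c1 \<pi> p i * measure (F (u1 \<theta> i)) A) = ennreal (\<Sum>i\<in>?I. c1 \<pi>' p' i * measure (F (u1 \<theta>' i)) A)"
      using K3_R(2)[where Q=Q and \<theta>=\<theta> and p=p and F=F and \<pi>=\<pi>, OF H pi A A] K3_R(2)[where Q=Q and \<theta>=\<theta>' and p=p' and F=F and \<pi>=\<pi>', OF H' pi' A A] same_law unfolding N1_eq by simp
    moreover have "0 \<le> (\<Sum>i\<in>?I. c1 \<pi> p i * measure (F (u1 \<theta> i)) A)" "0 \<le> (\<Sum>i\<in>?I. c1 \<pi>' p' i * measure (F (u1 \<theta>' i)) A)"
      using nn1 by (auto intro!: sum_nonneg)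
    ultimately show "(\<Sum>i\<in>?I. c1 \<pi> p i * measure (F (u1 \<theta> i)) A) = (\<Sum>i\<in>?I. c1 \<pi>' p' i * measure (F (u1 \<theta>' i)) A)"
      by simp
  qed
  have E1: "e1 Q \<pi> p \<theta> s = e1 Q \<pi>' p' \<theta>' s" for s
    unfolding e1_def using mix_ident[OF A2ii F_prob finI nn1 R1] .
  have R2: "(\<Sum>i\<in>?I. c2 \<pi> p i * measure (F (u1 \<theta> i)) A * measure (F (v1 \<theta> i)) B) =
            (\<Sum>i\<in>?I. c2 \<pi>' p' i * measure (F (u1 \<theta>' i)) A * measure (F (v1 \<theta>' i)) B)"
    if A: "A \<in> sets borel" and B: "B \<in> sets borel" for A B
  proof -
    have nn2: "0 \<le> c2 \<pi> p i" "0 \<le> c2 \<pi>' p' i" if "i \<in> ?I" for i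
      using c_pos[OF valid that] c_pos[OF valid' that] by auto
    have "ennreal (\<Sum>i\<in>?I. c2 \<pi> p i * measure (F (u1 \<theta> i)) A * measure (F (v1 \<theta> i)) B) =
          ennreal (\<Sum>i\<in>?I. c2 \<pi>' p' i * measure (F (u1 \<theta>' i)) A * measure (F (v1 \<theta>' i)) B)"
      using K3_R(1)[where Q=Q and \<theta>=\<theta> and p=p and F=F and \<pi>=\<pi>, OF H pi A B] K3_R(1)[where Q=Q and \<theta>=\<theta>' and p=p' and F=F and \<pi>=\<pi>', OF H' pi' A B] same_law unfolding N2_eq by simp
    moreover have "0 \<le> (\<Sum>i\<in>?I. c2 \<pi> p i * measure (F (u1 \<theta> i)) A * measure (F (v1 \<theta> i)) B)"
        "0 \<le> (\<Sum>i\<in>?I. c2 \<pi>' p' i * measure (F (u1 \<theta>' i)) A * measure (F (v1 \<theta>' i)) B)"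
      using nn2 by (auto intro!: sum_nonneg)
    ultimately show ?thesis by simp
  qed
  have E3: "e3 Q \<pi> p \<theta> s s' = e3 Q \<pi>' p' \<theta>' s s'" for s s'
  proof -
    have E2: "(\<Sum>i\<in>?I. (if u1 \<theta> i = s then c2 \<pi> p i else 0) * measure (F (v1 \<theta> i)) B) =
              (\<Sum>i\<in>?I. (if u1 \<theta>' i = s then c2 \<pi>' p' i else 0) * measure (F (v1 \<theta>' i)) B)"
      if B: "B \<in> sets borel" for B
    proof -
      have nnB: "0 \<le> c2 \<pi> p i * measure (F (v1 \<theta> i)) B \<and> 0 \<le> c2 \<pi>' p' i * measure (F (v1 \<theta>' i)) B
          \<and> u1 \<theta> i \<in> \<Theta> \<and> u1 \<theta>' i \<in> \<Theta>" if i: "i \<in> ?I" for i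
        using c_pos[OF valid i] c_pos[OF valid' i] by (simp add: less_imp_le)
      have RB: "\<forall>A\<in>sets borel. (\<Sum>i\<in>?I. (c2 \<pi> p i * measure (F (v1 \<theta> i)) B) * measure (F (u1 \<theta> i)) A) =
           (\<Sum>i\<in>?I. (c2 \<pi>' p' i * measure (F (v1 \<theta>' i)) B) * measure (F (u1 \<theta>' i)) A)"
        using R2[OF _ B] by (simp add: mult_ac)
      have "(\<Sum>i\<in>{i\<in>?I. u1 \<theta> i = s}. c2 \<pi> p i * measure (F (v1 \<theta> i)) B) =
            (\<Sum>i\<in>{i\<in>?I. u1 \<theta>' i = s}. c2 \<pi>' p' i * measure (F (v1 \<theta>' i)) B)"
        using mix_ident[OF A2ii F_prob finI nnB RB] .
      moreover have ifm: "(if b then x else 0) * (y::real) = (if b then x*y else 0)" for b x y by simp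
      ultimately show ?thesis by (simp only: sum.inter_filter[OF finI] ifm)
    qed
    have nn3: "0 \<le> (if u1 \<theta> i = s then c2 \<pi> p i else 0) \<and> 0 \<le> (if u1 \<theta>' i = s then c2 \<pi>' p' i else 0)
          \<and> v1 \<theta> i \<in> \<Theta> \<and> v1 \<theta>' i \<in> \<Theta>" if i: "i \<in> ?I" for i
      using c_pos[OF valid i] c_pos[OF valid' i] by (simp add: less_imp_le)
    have E2': "\<forall>B\<in>sets borel. (\<Sum>i\<in>?I. (if u1 \<theta> i = s then c2 \<pi> p i else 0) * measure (F (v1 \<theta> i)) B) =
              (\<Sum>i\<in>?I. (if u1 \<theta>' i = s then c2 \<pi>' p' i else 0) * measure (F (v1 \<theta>' i)) B)"
      using E2 by blast
    have "(\<Sum>i\<in>{i\<in>?I. v1 \<theta> i = s'}. if u1 \<theta> i = s then c2 \<pi> p i else 0) =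
          (\<Sum>i\<in>{i\<in>?I. v1 \<theta>' i = s'}. if u1 \<theta>' i = s then c2 \<pi>' p' i else 0)"
      by (rule mix_ident[OF A2ii F_prob finI nn3 E2'])
    then show ?thesis unfolding e3_def conv3[OF finI] .
  qed
  have adj: "Adj Q \<theta> s s' \<longleftrightarrow> Adj Q \<theta>' s s'" for s s'
    using e3_pos[OF valid, of s s'] e3_pos[OF valid', of s s'] E3[of s s'] by simp
  obtain \<sigma> where perm: "\<sigma> permutes {..<Q}" and th: "\<And>q l. q < Q \<Longrightarrow> l < Q \<Longrightarrow> \<theta>' q l = \<theta> (\<sigma> q) (\<sigma> l)"
    using perm_exists[OF valid valid' adj] by blast
  have sQ: "\<sigma> q < Q" if "q < Q" for q using permutes_in_image[OF perm] that by simp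
  have pos: "0 < \<pi> q" "0 < \<pi>' q" if "q < Q" for q using valid valid' that unfolding valid_params_def by auto
  have ppos: "0 < p q l" "0 < p' q l" if "q < Q" "l < Q" for q l using valid valid' that unfolding valid_params_def by auto
  have diag: "\<pi>' a = \<pi> (\<sigma> a) \<and> p' a a = p (\<sigma> a) (\<sigma> a)" if a: "a < Q" for a
  proof -
    have 1: "\<pi>' a * \<pi>' a * p' a a = \<pi> (\<sigma> a) * \<pi> (\<sigma> a) * p (\<sigma> a) (\<sigma> a)"
      using e1_diag[OF valid' a] e1_diag[OF valid sQ[OF a]] E1[of "\<theta>' a a"] th[OF a a] by simp
    have 2: "\<pi>' a * \<pi>' a * \<pi>' a * p' a a * p' a a = \<pi> (\<sigma> a) * \<pi> (\<sigma> a) * \<pi> (\<sigma> a) * p (\<sigma> a) (\<sigma> a) * p (\<sigma> a) (\<sigma> a)"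
      using e3_val[OF valid' a a] e3_val[OF valid sQ[OF a] sQ[OF a]] E3[of "\<theta>' a a" "\<theta>' a a"] th[OF a a] by simp
    show ?thesis
      using alg[of "\<pi> (\<sigma> a)" "p (\<sigma> a) (\<sigma> a)" "\<pi>' a" "p' a a"] 1 2 pos[OF a] pos[OF sQ[OF a]] ppos[OF a a] ppos[OF sQ[OF a] sQ[OF a]]
      by (simp add: power2_eq_square power3_eq_cube mult_ac)
  qed
  have off: "p' a b = p (\<sigma> a) (\<sigma> b)" if a: "a < Q" and b: "b < Q" for a b
  proof -
    have 2: "\<pi>' a * \<pi>' a * \<pi>' b * p' a a * p' a b = \<pi> (\<sigma> a) * \<pi> (\<sigma> a) * \<pi> (\<sigma> b) * p (\<sigma> a) (\<sigma> a) * p (\<sigma> a) (\<sigma> b)"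
      using e3_val[OF valid' a b] e3_val[OF valid sQ[OF a] sQ[OF b]] E3[of "\<theta>' a a" "\<theta>' a b"] th[OF a a] th[OF a b] by simp
    have "\<pi> (\<sigma> a) * \<pi> (\<sigma> a) * \<pi> (\<sigma> b) * p (\<sigma> a) (\<sigma> a) \<noteq> 0"
      using pos[OF sQ[OF a]] pos[OF sQ[OF b]] ppos[OF sQ[OF a] sQ[OF a]] by simp
    then show ?thesis using 2 diag[OF a] diag[OF b] by simp
  qed
  show ?thesis using perm diag off th by (intro exI[of _ \<sigma>]) auto
qed

end
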